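(* Let $G\in M_3(\mathbb{R})$ have eigenvalues $\lambda_1,\lambda_2,\lambda_3$ (counted with algebraic multiplicity) with $\Gamma_k:=\operatorname{Re}\lambda_k\ge 0$ for $k=1,2,3$, and let $f(x)=\det(x\mathbb{1}-G)$ be its characteristic polynomial. Then for every $\alpha\in[1,2]$, $$\Gamma_k\le \tfrac{1}{\alpha}\operatorname{Tr}G\ \text{ for all } k=1,2,3 \quad\Longleftrightarrow\quad f\!\left(\tfrac{\operatorname{Tr}G}{\alpha}\right)\ge 0 .$$ *)

theory Defs
  imports "Jordan_Normal_Form.Char_Poly"
begin

definition mat_trace :: "'a :: comm_ring_1 mat \<Rightarrow> 'a" where
  "mat_trace A = (\<Sum>i<dim_row A. A $$ (i, i))"

end

theory Submission
  imports Defs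
begin

lemma det2: assumes "(A::'a::comm_ring_1 mat) \<in> carrier_mat 2 2"
  shows "det A = A$$(0,0)*A$$(1,1) - A$$(0,1)*A$$(1,0)"
proof -
  have "det A = (\<Sum>i<2. A $$ (i,0) * cofactor A i 0)"
    by (rule laplace_expansion_column[OF assms]) simp
  also have "\<dots> = A$$(0,0)*A$$(1,1) - A$$(0,1)*A$$(1,0)"
    using assms
    by (simp add: numeral_2_eq_2 cofactor_def det_single mat_delete_carrier mat_delete_def algebra_simps)
  finally show ?thesis .
qed

lemma det2': "det (mat (Suc (Suc 0)) (Suc (Suc 0)) f :: 'a::comm_ring_1 mat) = f(0,0)*f(1,1) - f(0,1)*f(1,0)"
  using det2[of "mat 2 2 f"] by (simp add: numeral_2_eq_2)

lemma det3: assumes "(A::'a::comm_ring_1 mat) \<in> carrier_mat 3 3"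
  shows "det A = A$$(0,0)*(A$$(1,1)*A$$(2,2) - A$$(1,2)*A$$(2,1))
    - A$$(1,0)*(A$$(0,1)*A$$(2,2) - A$$(0,2)*A$$(2,1))
    + A$$(2,0)*(A$$(0,1)*A$$(1,2) - A$$(0,2)*A$$(1,1))"
proof -
  have "det A = (\<Sum>i<3. A $$ (i,0) * cofactor A i 0)"
    by (rule laplace_expansion_column[OF assms]) simp
  also have "\<dots> = A$$(0,0)*(A$$(1,1)*A$$(2,2) - A$$(1,2)*A$$(2,1))
    - A$$(1,0)*(A$$(0,1)*A$$(2,2) - A$$(0,2)*A$$(2,1))
    + A$$(2,0)*(A$$(0,1)*A$$(1,2) - A$$(0,2)*A$$(1,1))"
    using assms
    by (simp add: numeral_3_eq_3 numeral_2_eq_2 cofactor_def det2' mat_delete_def algebra_simps)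
  finally show ?thesis .
qed

lemma cp3: assumes A: "(A::'a::comm_ring_1 mat) \<in> carrier_mat 3 3"
  shows "poly (char_poly A) x = (x - A$$(0,0))*((x-A$$(1,1))*(x-A$$(2,2)) - A$$(1,2)*A$$(2,1))
     - (- A$$(1,0))*((- A$$(0,1))*(x-A$$(2,2)) - (- A$$(0,2))*(- A$$(2,1)))
     + (- A$$(2,0))*((- A$$(0,1))*(- A$$(1,2)) - (- A$$(0,2))*(x-A$$(1,1)))"
proof -
  have C: "char_poly_matrix A \<in> carrier_mat 3 3" using A by (simp add: char_poly_matrix_def)
  show ?thesis unfolding char_poly_def det3[OF C] using A
    by (simp add: char_poly_matrix_def algebra_simps)
qed

lemma trace_from_poly: fixes gaa gab gac gba gbb gbc gca gcb gcc l1 l2 l3 :: complex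
  assumes "\<And>z. (z - gaa)*((z-gbb)*(z-gcc) - gbc*gcb) - (-gba)*((-gab)*(z-gcc) - (-gac)*(-gcb))
     + (-gca)*((-gab)*(-gbc) - (-gac)*(z-gbb)) = (z-l1)*(z-l2)*(z-l3)"
  shows "l1+l2+l3 = gaa+gbb+gcc"
proof -
  note h0 = assms[of 0] and h1 = assms[of 1] and h2 = assms[of "-1"]
  have "2*((l1+l2+l3) - (gaa+gbb+gcc)) = 0"
    using arg_cong2[OF arg_cong2[OF h1 h2, of "(+)"] h0, of "\<lambda>u v. u - 2*v"] by (simp add: algebra_simps)
  hence "(l1+l2+l3) - (gaa+gbb+gcc) = 0" by (simp only: mult_eq_0_iff) simp
  then show ?thesis by simp
qed

lemma core_real: fixes a1 a2 a3 T \<alpha> :: real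
  assumes "a1 \<ge> 0" "a2 \<ge> 0" "a3 \<ge> 0" "a1+a2+a3 = T" "1 \<le> \<alpha>" "\<alpha> \<le> 2"
  shows "(a1 \<le> T/\<alpha> \<and> a2 \<le> T/\<alpha> \<and> a3 \<le> T/\<alpha>) \<longleftrightarrow> (T/\<alpha>-a1)*(T/\<alpha>-a2)*(T/\<alpha>-a3) \<ge> 0"
proof -
  define t where "t = T/\<alpha>"
  have T0: "T \<ge> 0" using assms by linarith
  have aT: "\<alpha>*T \<le> 2*T" using assms T0 by (intro mult_right_mono) auto
  have t1: "2*t \<ge> T" unfolding t_def using assms aT
    by (simp add: le_divide_eq mult.commute)
  have t2: "t \<ge> 0" unfolding t_def using T0 assms by simp
  have neg: "(t-a1)*(t-a2)*(t-a3) < 0" if "a1 > t \<or> a2 > t \<or> a3 > t"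
  proof -
    from that consider "a1 > t" "a2 < t" "a3 < t" | "a2 > t" "a1 < t" "a3 < t" | "a3 > t" "a1 < t" "a2 < t"
      using assms t1 by linarith
    then show ?thesis
    proof cases
      case 1 then show ?thesis by (simp add: mult_neg_pos mult_pos_pos)
    next
      case 2 then show ?thesis by (simp add: mult_neg_pos mult_pos_neg mult_pos_pos)
    next
      case 3 then show ?thesis by (simp add: mult_neg_pos mult_pos_neg mult_pos_pos)
    qed
  qed
  show ?thesis unfolding t_def[symmetric]
  proof
    assume "a1 \<le> t \<and> a2 \<le> t \<and> a3 \<le> t"
    thus "0 \<le> (t-a1)*(t-a2)*(t-a3)" by (simp add: mult_nonneg_nonneg)
  next
    assume h: "0 \<le> (t-a1)*(t-a2)*(t-a3)"
    show "a1 \<le> t \<and> a2 \<le> t \<and> a3 \<le> t"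
    proof (rule ccontr)
      assume "\<not> (a1 \<le> t \<and> a2 \<le> t \<and> a3 \<le> t)"
      hence "a1 > t \<or> a2 > t \<or> a3 > t" by auto
      with neg h show False by linarith
    qed
  qed
qed

lemma core_cplx: fixes a b r T \<alpha> :: real
  assumes "a \<ge> 0" "r \<ge> 0" "2*a+r = T" "1 \<le> \<alpha>" "\<alpha> \<le> 2" "b \<noteq> 0"
  shows "(a \<le> T/\<alpha> \<and> r \<le> T/\<alpha>) \<longleftrightarrow> ((T/\<alpha>-a)^2+b^2)*(T/\<alpha>-r) \<ge> 0"
proof -
  define t where "t = T/\<alpha>"
  have T0: "T \<ge> 0" using assms by linarith
  have aT: "\<alpha>*T \<le> 2*T" using assms T0 by (intro mult_right_mono) auto
  have t1: "2*t \<ge> T" unfolding t_def using assms aT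
    by (simp add: le_divide_eq mult.commute)
  have p: "(t-a)^2+b^2 > 0" using assms by (simp add: add_nonneg_pos)
  have "a \<le> t" using t1 assms by linarith
  then show ?thesis unfolding t_def[symmetric] using p
    by (simp add: zero_le_mult_iff)
qed

definition Q :: "real \<Rightarrow> complex \<Rightarrow> complex \<Rightarrow> complex \<Rightarrow> bool" where
  "Q t l1 l2 l3 \<longleftrightarrow> ((Re l1 \<le> t \<and> Re l2 \<le> t \<and> Re l3 \<le> t) \<longleftrightarrow>
      Re ((of_real t - l1)*(of_real t - l2)*(of_real t - l3)) \<ge> 0)"

lemma Q_perm1: "Q t l1 l2 l3 \<longleftrightarrow> Q t l2 l1 l3" unfolding Q_def by (simp add: ac_simps conj_ac)
lemma Q_perm2: "Q t l1 l2 l3 \<longleftrightarrow> Q t l1 l3 l2" unfolding Q_def by (simp add: ac_simps conj_ac)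

lemma case_real: fixes l1 l2 l3 :: complex and T \<alpha> :: real
  assumes "Re l1 \<ge> 0" "Re l2 \<ge> 0" "Re l3 \<ge> 0" "l1+l2+l3 = of_real T" "1 \<le> \<alpha>" "\<alpha> \<le> 2"
    "Im l1 = 0" "Im l2 = 0" "Im l3 = 0"
  shows "Q (T/\<alpha>) l1 l2 l3"
proof -
  have e: "l1 = of_real (Re l1)" "l2 = of_real (Re l2)" "l3 = of_real (Re l3)"
    using assms by (auto intro: complex_eqI)
  have s: "Re l1 + Re l2 + Re l3 = T" using arg_cong[OF assms(4), of Re] by simp
  have "Re ((of_real (T/\<alpha>) - l1)*(of_real (T/\<alpha>) - l2)*(of_real (T/\<alpha>) - l3))
     = (T/\<alpha> - Re l1)*(T/\<alpha> - Re l2)*(T/\<alpha> - Re l3)"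
    using assms(7-9) by (simp add: algebra_simps)
  then show ?thesis unfolding Q_def using core_real[OF assms(1-3) s assms(5,6)] by simp
qed

lemma case_cplx: fixes l1 l2 l3 :: complex and T \<alpha> :: real
  assumes "Re l1 \<ge> 0" "Re l3 \<ge> 0" "l1+l2+l3 = of_real T" "1 \<le> \<alpha>" "\<alpha> \<le> 2"
    "Im l1 \<noteq> 0" "l2 = cnj l1" "Im l3 = 0"
  shows "Q (T/\<alpha>) l1 l2 l3"
proof -
  have s: "2*Re l1 + Re l3 = T" using arg_cong[OF assms(3), of Re] assms(7) by simp
  have eq: "Re ((of_real t - l1)*(of_real t - l2)*(of_real t - l3))
     = ((t - Re l1)^2 + (Im l1)^2)*(t - Re l3)" for t
    using assms(7,8) by (simp add: algebra_simps power2_eq_square)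
  show ?thesis unfolding Q_def eq using core_cplx[OF assms(1,2) s assms(4,5,6)] assms(7) by auto
qed


lemma key: fixes l1 l2 l3 :: complex and T \<alpha> :: real
  assumes "Re l1 \<ge> 0" "Re l2 \<ge> 0" "Re l3 \<ge> 0" "l1+l2+l3 = of_real T" "1 \<le> \<alpha>" "\<alpha> \<le> 2"
    and cl: "\<And>z. z \<in> {l1,l2,l3} \<Longrightarrow> cnj z \<in> {l1,l2,l3}"
  shows "Q (T/\<alpha>) l1 l2 l3"
proof -
  have si: "Im l1 + Im l2 + Im l3 = 0" using arg_cong[OF assms(4), of Im] by simp
  show ?thesis
  proof (cases "Im l1 = 0")
    case False
    have "cnj l1 \<noteq> l1" using False by (auto simp: complex_eq_iff)
    with cl[of l1] have "cnj l1 = l2 \<or> cnj l1 = l3" by auto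
    then show ?thesis
    proof
      assume h: "cnj l1 = l2"
      hence "Im l3 = 0" using si by auto
      then show ?thesis using case_cplx[OF assms(1) assms(3) assms(4) assms(5) assms(6) False h[symmetric]] by blast
    next
      assume h: "cnj l1 = l3"
      hence "Im l2 = 0" using si by auto
      moreover have "l1+l3+l2 = of_real T" using assms(4) by (simp add: ac_simps)
      ultimately have "Q (T/\<alpha>) l1 l3 l2"
        using case_cplx[OF assms(1) assms(2) _ assms(5) assms(6) False h[symmetric]] by blast
      then show ?thesis using Q_perm2 by blast
    qed
  next
    case r1: True
    show ?thesis
    proof (cases "Im l2 = 0")
      case True
      then have "Im l3 = 0" using r1 si by simp
      then show ?thesis using case_real[OF assms(1-6) r1 True] by blast
    next
      case False
      have "cnj l2 \<noteq> l2" using False by (auto simp: complex_eq_iff)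
      moreover have "cnj l2 \<noteq> l1" using False r1 by (auto simp: complex_eq_iff)
      ultimately have h: "cnj l2 = l3" using cl[of l2] by auto
      have "l2+l3+l1 = of_real T" using assms(4) by (simp add: ac_simps)
      then have "Q (T/\<alpha>) l2 l3 l1"
        using case_cplx[OF assms(2) assms(1) _ assms(5) assms(6) False h[symmetric] r1] by blast
      then show ?thesis using Q_perm1 Q_perm2 by metis
    qed
  qed
qed

theorem mainTheorem2:
  fixes G :: "real mat" and \<alpha> :: real
  assumes G: "G \<in> carrier_mat 3 3"
    and nonneg: "\<And>z. eigenvalue (map_mat complex_of_real G) z \<Longrightarrow> Re z \<ge> 0"
    and alpha: "\<alpha> \<in> {1..2}"
  shows "(\<forall>z. eigenvalue (map_mat complex_of_real G) z \<longrightarrow> Re z \<le> mat_trace G / \<alpha>)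
         \<longleftrightarrow> poly (char_poly G) (mat_trace G / \<alpha>) \<ge> 0"
proof -
  define Gc where "Gc = map_mat complex_of_real G"
  have Gc: "Gc \<in> carrier_mat 3 3" using G by (simp add: Gc_def)
  obtain as where cp: "char_poly Gc = (\<Prod>a\<leftarrow>as. [:-a,1:])" "length as = 3"
    using char_poly_factorized[OF Gc] by blast
  have "\<exists>l1 l2 l3. as = [l1,l2,l3]" using cp(2)
    by (auto simp: numeral_3_eq_3 length_Suc_conv)
  then obtain l1 l2 l3 where as: "as = [l1,l2,l3]" by blast
  have pc: "poly (char_poly Gc) z = (z-l1)*(z-l2)*(z-l3)" for z
    using cp(1) as by (simp add: algebra_simps)
  have ev: "eigenvalue Gc z \<longleftrightarrow> z \<in> {l1,l2,l3}" for z
    using eigenvalue_root_char_poly[OF Gc] pc by simp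
  have fc: "poly (char_poly Gc) z =
     (z - of_real (G$$(0,0)))*((z-of_real (G$$(1,1)))*(z-of_real (G$$(2,2))) - of_real (G$$(1,2))*of_real (G$$(2,1)))
     - (- of_real (G$$(1,0)))*((- of_real (G$$(0,1)))*(z-of_real (G$$(2,2))) - (- of_real (G$$(0,2)))*(- of_real (G$$(2,1))))
     + (- of_real (G$$(2,0)))*((- of_real (G$$(0,1)))*(- of_real (G$$(1,2))) - (- of_real (G$$(0,2)))*(z-of_real (G$$(1,1))))" for z
    using cp3[OF Gc, of z] G by (simp add: Gc_def)
  have fr: "of_real (poly (char_poly G) x) = poly (char_poly Gc) (of_real x)" for x
    unfolding fc cp3[OF G, of x] by simp
  have sum: "l1+l2+l3 = of_real (G$$(0,0)) + of_real (G$$(1,1)) + of_real (G$$(2,2))"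
    by (rule trace_from_poly[where gab = "complex_of_real (G$$(0,1))" and gac = "complex_of_real (G$$(0,2))" and gba = "complex_of_real (G$$(1,0))" and gbc = "complex_of_real (G$$(1,2))" and gca = "complex_of_real (G$$(2,0))" and gcb = "complex_of_real (G$$(2,1))"]) (simp only: fc[symmetric] pc)
  have tr: "mat_trace G = G$$(0,0) + G$$(1,1) + G$$(2,2)"
    using G by (simp add: mat_trace_def numeral_3_eq_3 numeral_2_eq_2)
  have sum': "l1+l2+l3 = of_real (mat_trace G)" unfolding tr sum by simp
  have conj: "poly (char_poly Gc) (cnj z) = cnj (poly (char_poly Gc) z)" for z
    unfolding fc by simp
  have cl: "cnj z \<in> {l1,l2,l3}" if "z \<in> {l1,l2,l3}" for z
  proof -
    have "poly (char_poly Gc) z = 0" using that pc by auto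
    hence "poly (char_poly Gc) (cnj z) = 0" using conj by simp
    thus ?thesis using pc by simp
  qed
  have nn: "Re l1 \<ge> 0" "Re l2 \<ge> 0" "Re l3 \<ge> 0" using nonneg ev unfolding Gc_def by auto
  have a: "1 \<le> \<alpha>" "\<alpha> \<le> 2" using alpha by auto
  have Q: "Q (mat_trace G/\<alpha>) l1 l2 l3" by (rule key[OF nn sum' a cl])
  have P: "poly (char_poly G) (mat_trace G/\<alpha>) = Re ((of_real (mat_trace G/\<alpha>) - l1)*(of_real (mat_trace G/\<alpha>) - l2)*(of_real (mat_trace G/\<alpha>) - l3))"
    using arg_cong[OF fr[of "mat_trace G/\<alpha>"], of Re] pc by simp
  have L: "(\<forall>z. eigenvalue Gc z \<longrightarrow> Re z \<le> mat_trace G / \<alpha>) \<longleftrightarrow>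
      (Re l1 \<le> mat_trace G / \<alpha> \<and> Re l2 \<le> mat_trace G / \<alpha> \<and> Re l3 \<le> mat_trace G / \<alpha>)"
    using ev by auto
  show ?thesis unfolding Gc_def[symmetric] L P using Q unfolding Q_def by simp
qed

end
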